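(* Let $N, P, M, K, C$ be positive integers with $M$ dividing $P$, and put $S = P/M$. Let $\mathbf{x}_1,\dots,\mathbf{x}_N \in \mathbb{R}^P$ be fixed data points. For a vector $\mathbf{v}\in\mathbb{R}^P$ built from $M$ blocks, write $[\mathbf{v}^1;\dots;\mathbf{v}^M]$ for the vertical concatenation of the blocks $\mathbf{v}^m \in \mathbb{R}^S$. Define the following three optimal values (each is the infimum of the objective over the indicated feasible set; in every case $\mathbf{R}$ ranges over real $P\times P$ matrices with $\mathbf{R}^T\mathbf{R} = \mathbf{I}$, and the constraints on codes are imposed for all $i\in\{1,\dots,N\}$, $m\in\{1,\dots,M\}$, $c\in\{1,\dots,C\}$): (CKM) $f^*_{\mathrm{ck},M,K} = \inf \sum_{i=1}^N \big\|\mathbf{x}_i - \mathbf{R}[\mathbf{D}^1\mathbf{b}_i^1;\dots;\mathbf{D}^M\mathbf{b}_i^M]\big\|_2^2$ over $\mathbf{R}$, matrices $\mathbf{D}^m\in\mathbb{R}^{S\times K}$, and vectors $\mathbf{b}_i^m\in\{0,1\}^K$ with $\|\mathbf{b}_i^m\|_1 = 1$. (ECKM) $f^*_{\mathrm{eck},M,K,C} = \inf \sum_{i=1}^N \big\|\mathbf{x}_i - \mathbf{R}[\mathbf{D}^1\mathbf{b}_i^1;\dots;\mathbf{D}^M\mathbf{b}_i^M]\big\|_2^2$ over $\mathbf{R}$, matrices $\mathbf{D}^m\in\mathbb{R}^{S\times K}$, and vectors $\mathbf{b}_i^m\in\mathbb{Z}_{\ge 0}^K$ with $\|\mathbf{b}_i^m\|_1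 = C$. (OCKM) $f^*_{\mathrm{ock},M,K,C} = \inf \sum_{i=1}^N \big\|\mathbf{x}_i - \mathbf{R}[\textstyle\sum_{c=1}^C\mathbf{D}^{1,c}\mathbf{b}_i^{1,c};\dots;\sum_{c=1}^C\mathbf{D}^{M,c}\mathbf{b}_i^{M,c}]\big\|_2^2$ over $\mathbf{R}$, matrices $\mathbf{D}^{m,c}\in\mathbb{R}^{S\times K}$, and vectors $\mathbf{b}_i^{m,c}\in\{0,1\}^K$ with $\|\mathbf{b}_i^{m,c}\|_1 = 1$. Then $f^*_{\mathrm{ock},M,K,C} \le f^*_{\mathrm{ck},M,K}$ and $f^*_{\mathrm{ock},M,K,C} \le f^*_{\mathrm{eck},M,K,C}$.
   Context: $\|\cdot\|_2$ is the Euclidean norm, $\|\cdot\|_1$ the $\ell_1$ norm, and $\mathbb{Z}_{\ge 0}$ the set of non-negative integers. These are the optimal distortion errors of Cartesian $K$-means (CKM), extended Cartesian $K$-means (ECKM), and optimized Cartesian $K$-means (OCKM), respectively. *)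

theory Defs
  imports Complex_Main
begin

(* Conventions: all indices are 0-based.  A vector in R^P is a function
   nat => real read on {0..<P}; a P x P matrix is nat => nat => real read on
   {0..<P} x {0..<P}.  Data: x i p = p-th coordinate of x_i (i < N, p < P).
   Block vector [v^1;...;v^M] with v^m in R^S: coordinate q (q < P = M*S)
   is coordinate (q mod S) of block (q div S). *)

definition orthogonal_mat :: "nat \<Rightarrow> (nat \<Rightarrow> nat \<Rightarrow> real) \<Rightarrow> bool" where
  "orthogonal_mat P R \<longleftrightarrow>
     (\<forall>i<P. \<forall>j<P. (\<Sum>k<P. R k i * R k j) = (if i = j then 1 else 0))"

definition distortion :: "nat \<Rightarrow> nat \<Rightarrow> (nat \<Rightarrow> nat \<Rightarrow> real) \<Rightarrow> (nat \<Rightarrow> nat \<Rightarrow> real)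
    \<Rightarrow> (nat \<Rightarrow> nat \<Rightarrow> real) \<Rightarrow> real" where
  "distortion N P x R y = (\<Sum>i<N. \<Sum>p<P. (x i p - (\<Sum>q<P. R p q * y i q))\<^sup>2)"

definition one_hot :: "nat \<Rightarrow> (nat \<Rightarrow> nat) \<Rightarrow> bool" where
  "one_hot K b \<longleftrightarrow> (\<forall>k<K. b k \<le> 1) \<and> (\<Sum>k<K. b k) = 1"

(* [D^1 b_i^1; ...; D^M b_i^M], D m s k = entry (s,k) of D^m (S x K),
   b i m k = k-th entry of b_i^m *)
definition ck_recon :: "nat \<Rightarrow> nat \<Rightarrow> (nat \<Rightarrow> nat \<Rightarrow> nat \<Rightarrow> real)
    \<Rightarrow> (nat \<Rightarrow> nat \<Rightarrow> nat \<Rightarrow> nat) \<Rightarrow> nat \<Rightarrow> nat \<Rightarrow> real" where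
  "ck_recon S K D b i q = (\<Sum>k<K. D (q div S) (q mod S) k * real (b i (q div S) k))"

(* [sum_c D^{1,c} b_i^{1,c}; ...], D m c s k, b i m c k *)
definition ock_recon :: "nat \<Rightarrow> nat \<Rightarrow> nat \<Rightarrow> (nat \<Rightarrow> nat \<Rightarrow> nat \<Rightarrow> nat \<Rightarrow> real)
    \<Rightarrow> (nat \<Rightarrow> nat \<Rightarrow> nat \<Rightarrow> nat \<Rightarrow> nat) \<Rightarrow> nat \<Rightarrow> nat \<Rightarrow> real" where
  "ock_recon S K C D b i q =
     (\<Sum>c<C. \<Sum>k<K. D (q div S) c (q mod S) k * real (b i (q div S) c k))"

definition f_ck :: "nat \<Rightarrow> nat \<Rightarrow> nat \<Rightarrow> nat \<Rightarrow> (nat \<Rightarrow> nat \<Rightarrow> real) \<Rightarrow> real" where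
  "f_ck N P M K x = Inf {distortion N P x R (ck_recon (P div M) K D b) | R D b.
      orthogonal_mat P R \<and> (\<forall>i<N. \<forall>m<M. one_hot K (b i m))}"

definition f_eck :: "nat \<Rightarrow> nat \<Rightarrow> nat \<Rightarrow> nat \<Rightarrow> nat \<Rightarrow> (nat \<Rightarrow> nat \<Rightarrow> real) \<Rightarrow> real" where
  "f_eck N P M K C x = Inf {distortion N P x R (ck_recon (P div M) K D b) | R D b.
      orthogonal_mat P R \<and> (\<forall>i<N. \<forall>m<M. (\<Sum>k<K. b i m k) = C)}"

definition f_ock :: "nat \<Rightarrow> nat \<Rightarrow> nat \<Rightarrow> nat \<Rightarrow> nat \<Rightarrow> (nat \<Rightarrow> nat \<Rightarrow> real) \<Rightarrow> real" where
  "f_ock N P M K C x = Inf {distortion N P x R (ock_recon (P div M) K C D b) | R D b.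
      orthogonal_mat P R \<and> (\<forall>i<N. \<forall>m<M. \<forall>c<C. one_hot K (b i m c))}"

end

theory Submission
  imports Defs
begin

lemma onehot_count:
  fixes S :: "nat \<Rightarrow> nat"
  assumes mono: "\<And>k. S k \<le> S (Suc k)" and z: "S 0 = 0" and c: "c < S K"
  shows "(\<Sum>k<K. if S k \<le> c \<and> c < S (Suc k) then 1 else 0) = (1::nat)"
  using c
proof (induction K)
  case 0 then show ?case using z by simp
next
  case (Suc K)
  show ?case
  proof (cases "c < S K")
    case True
    then show ?thesis using Suc by simp
  next
    case False
    have mo: "\<And>a b. a \<le> b \<Longrightarrow> S a \<le> S b" by (rule lift_Suc_mono_le[of S, OF mono])
    have "\<forall>k<K. \<not> (S k \<le> c \<and> c < S (Suc k))"
    proof (intro allI impI)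
      fix k assume "k < K"
      then have "S (Suc k) \<le> S K" by (intro mo) simp
      then show "\<not> (S k \<le> c \<and> c < S (Suc k))" using False by linarith
    qed
    then have "(\<Sum>k<K. if S k \<le> c \<and> c < S (Suc k) then 1 else 0) = (0::nat)" by simp
    then show ?thesis using False Suc.prems by simp
  qed
qed

lemma range_count:
  fixes S :: "nat \<Rightarrow> nat"
  assumes "S k \<le> S (Suc k)" "S (Suc k) \<le> C"
  shows "(\<Sum>c<C. if S k \<le> c \<and> c < S (Suc k) then 1 else 0) = S (Suc k) - S k"
proof -
  have "(\<Sum>c<C. if S k \<le> c \<and> c < S (Suc k) then 1 else (0::nat))
       = card ({..<C} \<inter> {c. S k \<le> c \<and> c < S (Suc k)})"
    by (simp add: sum.If_cases)
  also have "{..<C} \<inter> {c. S k \<le> c \<and> c < S (Suc k)} = {S k..<S (Suc k)}"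
    using assms by auto
  finally show ?thesis by simp
qed

lemma decomp:
  fixes b :: "nat \<Rightarrow> nat"
  assumes "(\<Sum>k<K. b k) = C"
  shows "\<exists>b'. (\<forall>c<C. one_hot K (b' c)) \<and> (\<forall>k<K. (\<Sum>c<C. b' c k) = b k)"
proof -
  define S where "S k = (\<Sum>j<k. b j)" for k
  have mono: "\<And>k. S k \<le> S (Suc k)" by (simp add: S_def)
  have mo: "\<And>a b. a \<le> b \<Longrightarrow> S a \<le> S b" by (rule lift_Suc_mono_le[of S, OF mono])
  define b' where "b' c k = (if S k \<le> c \<and> c < S (Suc k) then 1 else (0::nat))" for c k
  have "\<forall>c<C. one_hot K (b' c)"
    unfolding one_hot_def
  proof (intro allI impI conjI)
    fix c k assume "c < C" show "b' c k \<le> 1" by (simp add: b'_def)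
  next
    fix c assume "c < C"
    then have "c < S K" using assms by (simp add: S_def)
    then show "(\<Sum>k<K. b' c k) = 1" unfolding b'_def
      using onehot_count[of S, OF mono] by (simp add: S_def)
  qed
  moreover have "\<forall>k<K. (\<Sum>c<C. b' c k) = b k"
  proof (intro allI impI)
    fix k assume "k < K"
    then have "S (Suc k) \<le> C" using mo[of "Suc k" K] assms by (simp add: S_def)
    then show "(\<Sum>c<C. b' c k) = b k" unfolding b'_def
      using range_count[of S, OF mono] by (simp add: S_def)
  qed
  ultimately show ?thesis by blast
qed

lemma bdd: "bdd_below {distortion N P x R (ock_recon S K C D b) | R D b.
      orthogonal_mat P R \<and> (\<forall>i<N. \<forall>m<M. \<forall>c<C. one_hot K (b i m c))}"
  unfolding bdd_below_def distortion_def
  by (rule exI[of _ 0]) (auto intro!: sum_nonneg)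

lemma orth_id: "orthogonal_mat P (\<lambda>i j. if i = j then 1 else 0)"
proof -
  have e: "\<And>k i j. (if k = i then 1 else 0) * (if k = j then 1 else 0) = (if k = i then (if i = j then 1 else 0) else (0::real))" by simp
  show ?thesis unfolding orthogonal_mat_def e by (simp add: sum.delta)
qed

theorem theorem1:
  fixes N P M K C :: nat and x :: "nat \<Rightarrow> nat \<Rightarrow> real"
  assumes "N > 0" and "P > 0" and "M > 0" and "K > 0" and "C > 0" and "M dvd P"
  shows "f_ock N P M K C x \<le> f_ck N P M K x \<and> f_ock N P M K C x \<le> f_eck N P M K C x"
proof
  let ?I = "\<lambda>i j. if i = j then 1 else (0::real)"
  show "f_ock N P M K C x \<le> f_ck N P M K x"
    unfolding f_ock_def f_ck_def
  proof (rule cInf_mono[OF _ bdd])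
    have oh: "one_hot K (\<lambda>k. if k = 0 then 1 else 0)"
      using assms(4) by (simp add: one_hot_def)
    show "{distortion N P x R (ck_recon (P div M) K D b) |R D b.
      orthogonal_mat P R \<and> (\<forall>i<N. \<forall>m<M. one_hot K (b i m))} \<noteq> {}"
      apply (rule ex_in_conv[THEN iffD1])
      apply (rule exI)
      apply (rule CollectI)
      apply (rule exI[of _ ?I])
      apply (rule exI[of _ "\<lambda>_ _ _. 0"])
      apply (rule exI[of _ "\<lambda>_ _. \<lambda>k. if k = 0 then 1 else 0"])
      using orth_id[of P] oh by simp
  next
    fix v assume "v \<in> {distortion N P x R (ck_recon (P div M) K D b) |R D b.
      orthogonal_mat P R \<and> (\<forall>i<N. \<forall>m<M. one_hot K (b i m))}"
    then obtain R D b where v: "v = distortion N P x R (ck_recon (P div M) K D b)"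
      and o: "orthogonal_mat P R" and h: "\<forall>i<N. \<forall>m<M. one_hot K (b i m)" by auto
    define D' where "D' m (c::nat) s k = (if c = 0 then D m s k else 0)" for m c s k
    define b' where "b' i m (c::nat) = b i m" for i m c
    have "ock_recon (P div M) K C D' b' = ck_recon (P div M) K D b"
    proof (intro ext)
      fix i q
      have "\<And>c. (\<Sum>k<K. D' (q div (P div M)) c (q mod (P div M)) k * real (b' i (q div (P div M)) c k))
          = (if c = 0 then ck_recon (P div M) K D b i q else 0)"
        by (simp add: D'_def b'_def ck_recon_def)
      then show "ock_recon (P div M) K C D' b' i q = ck_recon (P div M) K D b i q"
        unfolding ock_recon_def using assms(5) by (simp add: sum.delta)
    qed
    then have "v = distortion N P x R (ock_recon (P div M) K C D' b')" using v by simp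
    moreover have "\<forall>i<N. \<forall>m<M. \<forall>c<C. one_hot K (b' i m c)" using h by (simp add: b'_def)
    ultimately show "\<exists>a\<in>{distortion N P x R (ock_recon (P div M) K C D b) |R D b.
      orthogonal_mat P R \<and> (\<forall>i<N. \<forall>m<M. \<forall>c<C. one_hot K (b i m c))}. a \<le> v"
      apply (intro bexI[of _ v] order.refl)
      apply (rule CollectI)
      apply (rule exI[of _ R])
      apply (rule exI[of _ D'])
      apply (rule exI[of _ b'])
      using o by simp
  qed
next
  let ?I = "\<lambda>i j. if i = j then 1 else (0::real)"
  show "f_ock N P M K C x \<le> f_eck N P M K C x"
    unfolding f_ock_def f_eck_def
  proof (rule cInf_mono[OF _ bdd])
    have oh: "(\<Sum>k<K. (\<lambda>k. if k = 0 then C else 0) k) = C"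
      using assms(4) by (simp add: sum.delta)
    show "{distortion N P x R (ck_recon (P div M) K D b) |R D b.
      orthogonal_mat P R \<and> (\<forall>i<N. \<forall>m<M. (\<Sum>k<K. b i m k) = C)} \<noteq> {}"
      apply (rule ex_in_conv[THEN iffD1])
      apply (rule exI)
      apply (rule CollectI)
      apply (rule exI[of _ ?I])
      apply (rule exI[of _ "\<lambda>_ _ _. 0"])
      apply (rule exI[of _ "\<lambda>_ _. \<lambda>k. if k = 0 then C else 0"])
      using orth_id[of P] oh by simp
  next
    fix v assume "v \<in> {distortion N P x R (ck_recon (P div M) K D b) |R D b.
      orthogonal_mat P R \<and> (\<forall>i<N. \<forall>m<M. (\<Sum>k<K. b i m k) = C)}"
    then obtain R D b where v: "v = distortion N P x R (ck_recon (P div M) K D b)"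
      and o: "orthogonal_mat P R" and h: "\<forall>i<N. \<forall>m<M. (\<Sum>k<K. b i m k) = C" by auto
    define Q where "Q i m bb \<longleftrightarrow> (\<forall>c<C. one_hot K (bb c)) \<and> (\<forall>k<K. (\<Sum>c<C. bb c k) = b i m k)" for i m and bb :: "nat \<Rightarrow> nat \<Rightarrow> nat"
    define b' where "b' i m = (SOME bb. Q i m bb)" for i m
    have b'Q: "Q i m (b' i m)" if "i < N" "m < M" for i m
    proof -
      have "\<exists>bb. Q i m bb" unfolding Q_def using decomp[of "b i m" K C] h that by simp
      then show ?thesis unfolding b'_def by (rule someI_ex)
    qed
    have b': "\<And>i m. i < N \<Longrightarrow> m < M \<Longrightarrow>
        (\<forall>c<C. one_hot K (b' i m c)) \<and> (\<forall>k<K. (\<Sum>c<C. b' i m c k) = b i m k)"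
      using b'Q unfolding Q_def by simp
    define D' where "D' m (c::nat) s k = D m s k" for m c s k
    have key: "\<And>i q. i < N \<Longrightarrow> q < P \<Longrightarrow>
        ock_recon (P div M) K C D' b' i q = ck_recon (P div M) K D b i q"
    proof -
      fix i q assume i: "i < N" and q: "q < P"
      have qm: "q div (P div M) < M"
      proof -
        have pm: "P = M * (P div M)" using assms(6) by simp
        have "P div M > 0" using assms(2,3,6) pm by (metis gr0I mult_0_right)
        then show ?thesis using q pm div_less_iff_less_mult by (metis mult.commute)
      qed
      have "ock_recon (P div M) K C D' b' i q
          = (\<Sum>k<K. \<Sum>c<C. D (q div (P div M)) (q mod (P div M)) k * real (b' i (q div (P div M)) c k))"
        unfolding ock_recon_def D'_def by (rule sum.swap)
      also have "\<dots> = (\<Sum>k<K. D (q div (P div M)) (q mod (P div M)) k *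
            real (\<Sum>c<C. b' i (q div (P div M)) c k))"
        by (simp add: sum_distrib_left)
      also have "\<dots> = ck_recon (P div M) K D b i q"
        unfolding ck_recon_def using b'[OF i qm] by simp
      finally show "ock_recon (P div M) K C D' b' i q = ck_recon (P div M) K D b i q" .
    qed
    have "v = distortion N P x R (ock_recon (P div M) K C D' b')"
      unfolding v distortion_def using key by (auto intro!: sum.cong)
    moreover have "\<forall>i<N. \<forall>m<M. \<forall>c<C. one_hot K (b' i m c)" using b' by simp
    ultimately show "\<exists>a\<in>{distortion N P x R (ock_recon (P div M) K C D b) |R D b.
      orthogonal_mat P R \<and> (\<forall>i<N. \<forall>m<M. \<forall>c<C. one_hot K (b i m c))}. a \<le> v"
      apply (intro bexI[of _ v] order.refl)
      apply (rule CollectI)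
      apply (rule exI[of _ R])
      apply (rule exI[of _ D'])
      apply (rule exI[of _ b'])
      using o by simp
  qed
qed

end
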